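(* Let $n,m$ be positive integers and $L=L(q,u,z)$ a smooth function on $\mathbb R^n\times\mathbb R^n\times\mathbb R^m$. Let $q:[t_0,t_1]\to\mathbb R^n$ be $C^2$ and let $z:[t_0,t_1]\to\mathbb R^m$, $p:[t_0,t_1]\to\mathbb R^n$, $\mu:[t_0,t_1]\to\mathbb R^m$ be $C^1$ curves such that, with $u=\dot q$ and all derivatives of $L$ evaluated at $(q(t),\dot q(t),z(t))$, $$\dot z_i=L,\qquad \dot p_k=-\Big(\sum_{i=1}^m\mu_i\Big)\frac{\partial L}{\partial q^k},\qquad \dot\mu_i=-\Big(\sum_{j=1}^m\mu_j\Big)\frac{\partial L}{\partial z_i},$$ $$p_k=-\Big(\sum_{i=1}^m\mu_i\Big)\frac{\partial L}{\partial u^k},\qquad \mu_i(t_1)=1,$$ for all $i=1,\dots,m$, $k=1,\dots,n$, $t\in[t_0,t_1]$. Then $q$ satisfies, for all $k$ and $t$, $$\frac{d}{dt}\Big(\frac{\partial L}{\partial\dot q^k}\Big)-\frac{\partial L}{\partial q^k}=\Big(\sum_{i=1}^m\frac{\partial L}{\partial z_i}\Big)\frac{\partial L}{\partial\dot q^k},$$ where $\partial L/\partial\dot q^k$ denotes $\partial L/\partial u^k$ evaluated at $u=\dot q$.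
   Context: These are the Pontryagin maximum principle necessary conditions for the $m$-contact Herglotz variational problem: extremize the terminal cost $\Phi=\sum_{i=1}^mz_i(t_1)$ subject to the control system $\dot q^k=u^k$, $\dot z_i=L(q,u,z)$ ($i=1,\dots,m$) with fixed initial data $q(t_0)=q_0$, $z_i(t_0)=z_i^0$, using the Pontryagin Hamiltonian $H=p_ku^k+\sum_{i=1}^m\mu_iL(q,u,z)$ (adjoint equations $\dot p_k=-\partial H/\partial q^k$, $\dot\mu_i=-\partial H/\partial z_i$, stationarity $\partial H/\partial u^k=0$, transversality $\mu_i(t_1)=1$). The concluding equations are called the $m$-contact Herglotz (Euler–Lagrange) equations. *)

theory Defs
  imports "HOL-Analysis.Analysis"
begin

definition partial_dir :: "('a::real_normed_vector \<Rightarrow> real) \<Rightarrow> 'a \<Rightarrow> 'a \<Rightarrow> real" where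
  "partial_dir f b x = deriv (\<lambda>s. f (x + s *\<^sub>R b)) 0"

fun C_k :: "nat \<Rightarrow> ('a::euclidean_space \<Rightarrow> real) \<Rightarrow> bool" where
  "C_k 0 f = continuous_on UNIV f"
| "C_k (Suc k) f = (continuous_on UNIV f \<and>
      (\<forall>b\<in>Basis. \<forall>x. (\<lambda>s. f (x + s *\<^sub>R b)) differentiable (at 0)) \<and>
      (\<forall>b\<in>Basis. C_k k (partial_dir f b)))"

definition smooth_fun :: "('a::euclidean_space \<Rightarrow> real) \<Rightarrow> bool" where
  "smooth_fun f = (\<forall>k. C_k k f)"

definition smooth_lagrangian ::
  "(real^'n \<Rightarrow> real^'n \<Rightarrow> real^'m \<Rightarrow> real) \<Rightarrow> bool" where
  "smooth_lagrangian L = smooth_fun (\<lambda>(q, u, z). L q u z)"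

definition L_q :: "(real^'n \<Rightarrow> real^'n \<Rightarrow> real^'m \<Rightarrow> real) \<Rightarrow> 'n \<Rightarrow>
    real^'n \<Rightarrow> real^'n \<Rightarrow> real^'m \<Rightarrow> real" where
  "L_q L k q u z = deriv (\<lambda>s. L (q + s *\<^sub>R axis k 1) u z) 0"

definition L_u :: "(real^'n \<Rightarrow> real^'n \<Rightarrow> real^'m \<Rightarrow> real) \<Rightarrow> 'n \<Rightarrow>
    real^'n \<Rightarrow> real^'n \<Rightarrow> real^'m \<Rightarrow> real" where
  "L_u L k q u z = deriv (\<lambda>s. L q (u + s *\<^sub>R axis k 1) z) 0"

definition L_z :: "(real^'n \<Rightarrow> real^'n \<Rightarrow> real^'m \<Rightarrow> real) \<Rightarrow> 'm \<Rightarrow>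
    real^'n \<Rightarrow> real^'n \<Rightarrow> real^'m \<Rightarrow> real" where
  "L_z L i q u z = deriv (\<lambda>s. L q u (z + s *\<^sub>R axis i 1)) 0"

end

theory Submission
  imports Defs
begin

lemma comp_deriv:
  fixes f :: "real \<Rightarrow> real^'m"
  assumes "(f has_vector_derivative f') (at t within S)"
  shows "((\<lambda>s. f s $ i) has_real_derivative (f' $ i)) (at t within S)"
  using bounded_linear.has_vector_derivative[OF bounded_linear_vec_nth assms]
  by (simp add: has_real_derivative_iff_has_vector_derivative)

lemma sum_deriv:
  fixes f :: "real \<Rightarrow> real^'m"
  assumes "(f has_vector_derivative f') (at t within S)"
  shows "((\<lambda>s. \<Sum>i\<in>UNIV. f s $ i) has_real_derivative (\<Sum>i\<in>UNIV. f' $ i)) (at t within S)"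
  by (rule DERIV_sum, rule comp_deriv[OF assms])

lemma Lz_cont:
  fixes L :: "real^'n \<Rightarrow> real^'n \<Rightarrow> real^'m \<Rightarrow> real"
  assumes "smooth_lagrangian L"
  shows "continuous_on UNIV (\<lambda>(q,u,z). L_z L i q u z)"
proof -
  let ?f = "\<lambda>(q, u, z). L q u z"
  let ?b = "(0::real^'n, 0::real^'n, axis i (1::real))"
  have b: "?b \<in> Basis"
    by (auto simp: Basis_prod_def image_iff)
  have "C_k 1 ?f" using assms unfolding smooth_lagrangian_def smooth_fun_def by blast
  then have c: "continuous_on UNIV (partial_dir ?f ?b)" using b by simp
  have "partial_dir ?f ?b = (\<lambda>(q,u,z). L_z L i q u z)"
    by (auto simp: partial_dir_def L_z_def fun_eq_iff)
  then show ?thesis using c by simp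
qed



theorem mainTheorem8:
  fixes L :: "real^'n \<Rightarrow> real^'n \<Rightarrow> real^'m \<Rightarrow> real"
    and q q' q'' p p' :: "real \<Rightarrow> real^'n"
    and z z' \<mu> \<mu>' :: "real \<Rightarrow> real^'m"
    and t0 t1 :: real
  assumes smooth: "smooth_lagrangian L"
    and interval: "t0 < t1"
    and q_d1: "\<forall>t\<in>{t0..t1}. (q has_vector_derivative q' t) (at t within {t0..t1})"
    and q_d2: "\<forall>t\<in>{t0..t1}. (q' has_vector_derivative q'' t) (at t within {t0..t1})"
    and q_C2: "continuous_on {t0..t1} q''"
    and z_d: "\<forall>t\<in>{t0..t1}. (z has_vector_derivative z' t) (at t within {t0..t1})"
    and z_C1: "continuous_on {t0..t1} z'"
    and p_d: "\<forall>t\<in>{t0..t1}. (p has_vector_derivative p' t) (at t within {t0..t1})"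
    and p_C1: "continuous_on {t0..t1} p'"
    and mu_d: "\<forall>t\<in>{t0..t1}. (\<mu> has_vector_derivative \<mu>' t) (at t within {t0..t1})"
    and mu_C1: "continuous_on {t0..t1} \<mu>'"
    and eq_z: "\<forall>t\<in>{t0..t1}. \<forall>i. z' t $ i = L (q t) (q' t) (z t)"
    and eq_p: "\<forall>t\<in>{t0..t1}. \<forall>k. p' t $ k =
                 - (\<Sum>i\<in>UNIV. \<mu> t $ i) * L_q L k (q t) (q' t) (z t)"
    and eq_mu: "\<forall>t\<in>{t0..t1}. \<forall>i. \<mu>' t $ i =
                 - (\<Sum>j\<in>UNIV. \<mu> t $ j) * L_z L i (q t) (q' t) (z t)"
    and stat: "\<forall>t\<in>{t0..t1}. \<forall>k. p t $ k =
                 - (\<Sum>i\<in>UNIV. \<mu> t $ i) * L_u L k (q t) (q' t) (z t)"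
    and transv: "\<forall>i. \<mu> t1 $ i = 1"
  shows "\<forall>k. \<forall>t\<in>{t0..t1}.
           ((\<lambda>s. L_u L k (q s) (q' s) (z s)) has_real_derivative
              (L_q L k (q t) (q' t) (z t)
               + (\<Sum>i\<in>UNIV. L_z L i (q t) (q' t) (z t)) * L_u L k (q t) (q' t) (z t)))
           (at t within {t0..t1})"
  
proof (intro allI ballI)
  fix k t
  assume tI: "t \<in> {t0..t1}"
  define I where "I = {t0..t1}"
  have cq: "continuous_on I q" using q_d1 continuous_on_vector_derivative I_def by blast
  have cq': "continuous_on I q'" using q_d2 continuous_on_vector_derivative I_def by blast
  have cz: "continuous_on I z" using z_d continuous_on_vector_derivative I_def by blast
  have ctr: "continuous_on I (\<lambda>t. (q t, q' t, z t))"
    by (intro continuous_on_Pair cq cq' cz)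
  define S where "S t = (\<Sum>i\<in>UNIV. L_z L i (q t) (q' t) (z t))" for t
  have cS: "continuous_on I S"
    unfolding S_def
  proof (rule continuous_on_sum)
    fix i
    have "continuous_on I ((\<lambda>(q,u,z). L_z L i q u z) \<circ> (\<lambda>t. (q t, q' t, z t)))"
      by (rule continuous_on_compose[OF ctr continuous_on_subset[OF Lz_cont[OF smooth]]]) auto
    then show "continuous_on I (\<lambda>t. L_z L i (q t) (q' t) (z t))" by (simp add: o_def)
  qed
  define M where "M t = (\<Sum>i\<in>UNIV. \<mu> t $ i)" for t
  have dM: "(M has_real_derivative (- M s * S s)) (at s within I)" if "s \<in> I" for s
  proof -
    have "(M has_real_derivative (\<Sum>i\<in>UNIV. \<mu>' s $ i)) (at s within I)"
      unfolding M_def using sum_deriv mu_d that I_def by blast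
    moreover have "(\<Sum>i\<in>UNIV. \<mu>' s $ i) = - M s * S s"
      using eq_mu that unfolding I_def M_def S_def by (simp add: sum_distrib_left)
    ultimately show ?thesis by simp
  qed
  define G where "G u = integral {t0..u} S" for u
  have dG: "(G has_real_derivative S s) (at s within I)" if "s \<in> I" for s
    using integral_has_vector_derivative[OF cS[unfolded I_def] that[unfolded I_def]]
    unfolding G_def I_def by (simp add: has_real_derivative_iff_has_vector_derivative)
  define N where "N u = M u * exp (G u)" for u
  have dN: "(N has_real_derivative 0) (at s within I)" if "s \<in> I" for s
  proof -
    show ?thesis
      using DERIV_mult[OF dM[OF that] DERIV_chain2[OF DERIV_exp dG[OF that]]]
      unfolding N_def by (simp add: algebra_simps)
  qed
  obtain c where c: "\<forall>x\<in>I. N x = c"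
    using has_field_derivative_zero_constant[of I N] dN unfolding I_def by auto
  have t1I: "t1 \<in> I" using interval I_def by auto
  have "M t1 = of_nat CARD('m)" using transv unfolding M_def by simp
  then have "N t1 \<noteq> 0" unfolding N_def by simp
  then have Mnz: "M s \<noteq> 0" if "s \<in> I" for s
    using c that t1I unfolding N_def by force
  have dp: "((\<lambda>s. p s $ k) has_real_derivative (p' s $ k)) (at s within I)" if "s \<in> I" for s
    using comp_deriv p_d that I_def by blast
  have tI': "t \<in> I" using tI I_def by simp
  have D: "((\<lambda>s. - p s $ k / M s) has_real_derivative
      ((- p' t $ k) * M t - (- p t $ k) * (- M t * S t)) / (M t * M t)) (at t within I)"
    by (rule DERIV_divide[OF DERIV_minus[OF dp[OF tI']] dM[OF tI'] Mnz[OF tI']])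
  have eqv: "((- p' t $ k) * M t - (- p t $ k) * (- M t * S t)) / (M t * M t)
     = L_q L k (q t) (q' t) (z t) + S t * L_u L k (q t) (q' t) (z t)"
    using eq_p stat tI Mnz[OF tI'] unfolding M_def[symmetric]
    by (simp add: power2_eq_square field_simps)
  have eqf: "- p s $ k / M s = L_u L k (q s) (q' s) (z s)" if "s \<in> I" for s
    using stat that Mnz[OF that] unfolding I_def M_def[symmetric] by simp
  show "((\<lambda>s. L_u L k (q s) (q' s) (z s)) has_real_derivative
          (L_q L k (q t) (q' t) (z t)
           + (\<Sum>i\<in>UNIV. L_z L i (q t) (q' t) (z t)) * L_u L k (q t) (q' t) (z t)))
          (at t within {t0..t1})"
    using has_field_derivative_transform_within[OF D[unfolded eqv] zero_less_one tI' eqf]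
    unfolding I_def S_def by simp
qed

end
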